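(* Let $\tau\in(0,1]$ and let $p_1,p_2$ be distributions on a common countable domain (each extended by infinitely many zero-probability elements) satisfying $R_\tau(p_1,p_2)\le\epsilon$. Then there exists a bijection (relabeling) $\pi$ of the domain such that $$\sum_i\big|\max(p_1(i),\tau)-\max(p_2(\pi(i)),\tau)\big|\le 2\epsilon.$$
   Context: The histogram of a distribution $p$ is the map $h_p:(0,1]\to\mathbb{N}\cup\{0\}$, $h_p(x)=|\{a:p(a)=x\}|$; its probability mass at $x$ is $x h_p(x)$. For $\tau\in[0,1]$, $R_\tau(p_1,p_2)=R_\tau(h_{p_1},h_{p_2})$ is the $\tau$-truncated relative earthmover distance: the minimum, over all schemes moving the probability mass of $h_{p_1}$ to yield that of $h_{p_2}$, of the total cost, where moving one unit of mass from probability $x$ to probability $y$ costs $|\log\max(x,\tau)-\log\max(y,\tau)|$. *)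

theory Defs
  imports "HOL-Analysis.Analysis"
begin

definition is_distr :: "(nat \<Rightarrow> real) \<Rightarrow> bool" where
  "is_distr p \<longleftrightarrow> (\<forall>a. 0 \<le> p a) \<and> (p has_sum 1) UNIV \<and> infinite {a. p a = 0}"

definition hist :: "(nat \<Rightarrow> real) \<Rightarrow> real \<Rightarrow> nat" where
  "hist p x = card {a. p a = x}"

text \<open>A scheme m x y = amount of probability mass moved from probability x to
probability y, moving the mass of h_{p1} (x * h_{p1}(x) at x) to that of h_{p2}.\<close>
definition em_scheme :: "(nat \<Rightarrow> real) \<Rightarrow> (nat \<Rightarrow> real) \<Rightarrow> (real \<Rightarrow> real \<Rightarrow> real) \<Rightarrow> bool" where
  "em_scheme p1 p2 m \<longleftrightarrow>
     (\<forall>x y. 0 \<le> m x y) \<and>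
     (\<forall>x y. m x y \<noteq> 0 \<longrightarrow> x \<in> {0<..1} \<and> y \<in> {0<..1}) \<and>
     (\<forall>x\<in>{0<..1}. ((\<lambda>y. m x y) has_sum (x * real (hist p1 x))) {0<..1}) \<and>
     (\<forall>y\<in>{0<..1}. ((\<lambda>x. m x y) has_sum (y * real (hist p2 y))) {0<..1})"

text \<open>Total cost of a scheme (in ennreal, so non-summable costs are infinite).\<close>
definition em_cost :: "real \<Rightarrow> (real \<Rightarrow> real \<Rightarrow> real) \<Rightarrow> ennreal" where
  "em_cost \<tau> m = (\<Sum>\<^sub>\<infinity>(x,y)\<in>{0<..1::real}\<times>{0<..1::real}.
        ennreal (m x y * \<bar>ln (max x \<tau>) - ln (max y \<tau>)\<bar>))"

definition R_trunc :: "real \<Rightarrow> (nat \<Rightarrow> real) \<Rightarrow> (nat \<Rightarrow> real) \<Rightarrow> ennreal" where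
  "R_trunc \<tau> p1 p2 = (INF m\<in>{m. em_scheme p1 p2 m}. em_cost \<tau> m)"

end

theory Submission
  imports Defs
begin


definition dlt :: "real \<Rightarrow> real set \<Rightarrow> real \<Rightarrow> real" where
  "dlt \<tau> G t = t - Max (insert \<tau> {g\<in>G. g < t})"

lemma dlt_pos:
  assumes "finite G" "\<forall>g\<in>G. \<tau> < g" "t \<in> G"
  shows "0 < dlt \<tau> G t"
proof -
  have "Max (insert \<tau> {g\<in>G. g < t}) < t"
    using assms by (subst Max_less_iff) auto
  thus ?thesis unfolding dlt_def by simp
qed

lemma dlt_sum:
  assumes "finite G" "\<forall>g\<in>G. \<tau> < g" "s \<in> insert \<tau> G"
  shows "(\<Sum>t\<in>G. dlt \<tau> G t * of_bool (t \<le> s)) = s - \<tau>"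
  using assms
proof (induction G arbitrary: s rule: finite_linorder_max_induct)
  case empty
  then show ?case by simp
next
  case (insert b A)
  have bA: "b \<notin> A" using insert.hyps(2) by auto
  have eqA: "dlt \<tau> (insert b A) t = dlt \<tau> A t" if "t \<in> A" for t
  proof -
    have "{g\<in>insert b A. g < t} = {g\<in>A. g < t}" using insert.hyps(2) that by auto
    thus ?thesis unfolding dlt_def by simp
  qed
  have sumA: "(\<Sum>t\<in>A. dlt \<tau> (insert b A) t * of_bool (t \<le> s)) = (\<Sum>t\<in>A. dlt \<tau> A t * of_bool (t \<le> s))" for s
    by (rule sum.cong) (auto simp: eqA)
  have tb: "\<tau> < b" using insert.prems by auto
  have IH: "\<And>s. s \<in> insert \<tau> A \<Longrightarrow> (\<Sum>t\<in>A. dlt \<tau> A t * of_bool (t \<le> s)) = s - \<tau>"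
    using insert.IH insert.prems by auto
  show ?case
  proof (cases "s = b")
    case False
    then have s: "s \<in> insert \<tau> A" using insert.prems by auto
    then have "s < b" using tb insert.hyps(2) by auto
    have "(\<Sum>t\<in>insert b A. dlt \<tau> (insert b A) t * of_bool (t \<le> s)) = dlt \<tau> (insert b A) b * of_bool (b \<le> s) + (\<Sum>t\<in>A. dlt \<tau> (insert b A) t * of_bool (t \<le> s))"
      by (rule sum.insert[OF insert.hyps(1) bA])
    also have "\<dots> = (\<Sum>t\<in>A. dlt \<tau> A t * of_bool (t \<le> s))" using \<open>s < b\<close> sumA[of s] by simp
    finally show ?thesis using IH[OF s] by simp
  next
    case True
    define M where "M = Max (insert \<tau> A)"
    have M: "M \<in> insert \<tau> A" unfolding M_def using insert.hyps(1) by (intro Max_in) auto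
    have "{g\<in>insert b A. g < b} = A" using insert.hyps(2) by auto
    then have db: "dlt \<tau> (insert b A) b = b - M" unfolding dlt_def M_def by simp
    have "(\<Sum>t\<in>A. dlt \<tau> A t * of_bool (t \<le> M)) = M - \<tau>" using IH M by simp
    moreover have "(\<Sum>t\<in>A. dlt \<tau> A t * of_bool (t \<le> M)) = (\<Sum>t\<in>A. dlt \<tau> A t * of_bool (t \<le> b))"
      using insert.hyps M_def by (intro sum.cong) auto
    moreover have "(\<Sum>t\<in>insert b A. dlt \<tau> (insert b A) t * of_bool (t \<le> s)) = dlt \<tau> (insert b A) b * of_bool (b \<le> s) + (\<Sum>t\<in>A. dlt \<tau> (insert b A) t * of_bool (t \<le> s))"
      by (rule sum.insert[OF insert.hyps(1) bA])
    ultimately show ?thesis using True db sumA[of b] by simp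
  qed
qed

lemma dlt_absdiff:
  assumes "finite G" "\<forall>g\<in>G. \<tau> < g" "a \<in> insert \<tau> G" "b \<in> insert \<tau> G"
  shows "(\<Sum>t\<in>G. dlt \<tau> G t * \<bar>of_bool (t \<le> a) - of_bool (t \<le> b)\<bar>) = \<bar>a - b\<bar>"
proof (cases "b \<le> a")
  case True
  have "(\<Sum>t\<in>G. dlt \<tau> G t * \<bar>of_bool (t \<le> a) - of_bool (t \<le> b)\<bar>)
      = (\<Sum>t\<in>G. dlt \<tau> G t * of_bool (t \<le> a) - dlt \<tau> G t * of_bool (t \<le> b))"
    using True by (intro sum.cong) (auto simp: algebra_simps)
  also have "\<dots> = (\<Sum>t\<in>G. dlt \<tau> G t * of_bool (t \<le> a)) - (\<Sum>t\<in>G. dlt \<tau> G t * of_bool (t \<le> b))" by (rule sum_subtractf)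
  also have "\<dots> = (a - \<tau>) - (b - \<tau>)" by (simp only: dlt_sum[OF assms(1,2,3)] dlt_sum[OF assms(1,2,4)])
  finally show ?thesis using True by simp
next
  case False
  have "(\<Sum>t\<in>G. dlt \<tau> G t * \<bar>of_bool (t \<le> a) - of_bool (t \<le> b)\<bar>)
      = (\<Sum>t\<in>G. dlt \<tau> G t * of_bool (t \<le> b) - dlt \<tau> G t * of_bool (t \<le> a))"
    using False by (intro sum.cong) (auto simp: algebra_simps)
  also have "\<dots> = (\<Sum>t\<in>G. dlt \<tau> G t * of_bool (t \<le> b)) - (\<Sum>t\<in>G. dlt \<tau> G t * of_bool (t \<le> a))" by (rule sum_subtractf)
  also have "\<dots> = (b - \<tau>) - (a - \<tau>)" by (simp only: dlt_sum[OF assms(1,2,3)] dlt_sum[OF assms(1,2,4)])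
  finally show ?thesis using False by simp
qed

lemma dlt_pair:
  assumes "finite G" "\<forall>g\<in>G. \<tau> < g" "0 < \<tau>" "X \<in> insert \<tau> G" "Y \<in> insert \<tau> G"
  shows "(\<Sum>t\<in>G. dlt \<tau> G t * \<bar>of_bool (t \<le> X) / X - of_bool (t \<le> Y) / Y\<bar>) \<le> 2 * \<bar>ln X - ln Y\<bar>"
proof -
  have key: "(\<Sum>t\<in>G. dlt \<tau> G t * \<bar>of_bool (t \<le> X) / X - of_bool (t \<le> Y) / Y\<bar>) \<le> 2 * (ln X - ln Y)"
    if XY: "Y \<le> X" "X \<in> insert \<tau> G" "Y \<in> insert \<tau> G" for X Y
  proof -
    have Yp: "\<tau> \<le> Y" "\<tau> \<le> X" using XY assms(2) by auto
    then have Yp': "0 < Y" "0 < X" using assms(3) by auto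
    have "(\<Sum>t\<in>G. dlt \<tau> G t * \<bar>of_bool (t \<le> X) / X - of_bool (t \<le> Y) / Y\<bar>)
       = (\<Sum>t\<in>G. (1/Y - 1/X) * (dlt \<tau> G t * of_bool (t \<le> Y)) + (1/X) * (dlt \<tau> G t * of_bool (t \<le> X)) - (1/X) * (dlt \<tau> G t * of_bool (t \<le> Y)))"
    proof (rule sum.cong)
      fix t assume "t \<in> G"
      show "dlt \<tau> G t * \<bar>of_bool (t \<le> X) / X - of_bool (t \<le> Y) / Y\<bar> = (1/Y - 1/X) * (dlt \<tau> G t * of_bool (t \<le> Y)) + (1/X) * (dlt \<tau> G t * of_bool (t \<le> X)) - (1/X) * (dlt \<tau> G t * of_bool (t \<le> Y))"
      proof -
        have "1/X \<le> 1/Y" using XY Yp' by (simp add: frac_le)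
        then show ?thesis using XY(1) Yp' by (auto simp: algebra_simps)
      qed
    qed simp
    also have "\<dots> = (1/Y - 1/X) * (Y - \<tau>) + (1/X) * (X - \<tau>) - (1/X) * (Y - \<tau>)"
      by (simp only: sum.distrib sum_subtractf sum_distrib_left[symmetric] dlt_sum[OF assms(1,2) XY(2)] dlt_sum[OF assms(1,2) XY(3)])
    also have "\<dots> \<le> 2 * (1 - Y / X)"
    proof -
      have "(1/Y - 1/X) * (Y - \<tau>) \<le> (1/Y - 1/X) * Y"
        using Yp Yp' XY(1) assms(3) by (intro mult_left_mono) (auto simp: frac_le)
      also have "\<dots> = 1 - Y/X" using Yp' by (simp add: field_simps)
      finally show ?thesis using Yp' by (simp add: field_simps)
    qed
    also have "\<dots> \<le> 2 * (ln X - ln Y)"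
    proof -
      have "ln (Y/X) \<le> Y/X - 1" using Yp' by (intro ln_le_minus_one) simp
      then show ?thesis using Yp' by (simp add: ln_div)
    qed
    finally show ?thesis .
  qed
  show ?thesis
  proof (cases "Y \<le> X")
    case True
    then have "ln Y \<le> ln X" using assms by auto
    then show ?thesis using key[OF True assms(4,5)] by simp
  next
    case False
    have "ln X \<le> ln Y" using False assms by auto
    moreover have "(\<Sum>t\<in>G. dlt \<tau> G t * \<bar>of_bool (t \<le> X) / X - of_bool (t \<le> Y) / Y\<bar>)
       = (\<Sum>t\<in>G. dlt \<tau> G t * \<bar>of_bool (t \<le> Y) / Y - of_bool (t \<le> X) / X\<bar>)"
      by (simp add: abs_minus_commute)
    ultimately show ?thesis using key[of X Y] False assms by simp
  qed
qed



lemma distr_nonneg: "is_distr p \<Longrightarrow> 0 \<le> p i"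
  unfolding is_distr_def by auto

lemma distr_le1:
  assumes "is_distr p" shows "p i \<le> 1"
proof -
  have h: "(p has_sum 1) UNIV" using assms unfolding is_distr_def by auto
  have "sum p {i} \<le> 1"
    by (rule finite_sum_le_has_sum[OF h]) (use assms in \<open>auto simp: distr_nonneg\<close>)
  thus ?thesis by simp
qed

lemma distr_finite:
  assumes "is_distr p" "0 < t" shows "finite {i. t \<le> p i}"
proof (rule ccontr)
  assume inf: "infinite {i. t \<le> p i}"
  define k where "k = nat \<lceil>1/t\<rceil> + 1"
  obtain B where B: "finite B" "card B = k" "B \<subseteq> {i. t \<le> p i}"
    using infinite_arbitrarily_large[OF inf] by blast
  have h: "(p has_sum 1) UNIV" using assms unfolding is_distr_def by auto
  have "sum p B \<le> 1"
    by (rule finite_sum_le_has_sum[OF h]) (use assms B in \<open>auto simp: distr_nonneg\<close>)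
  moreover have "of_nat (card B) * t \<le> sum p B"
    by (rule sum_bounded_below) (use B in auto)
  moreover have "1 < real k * t"
  proof -
    have "1/t \<le> real (nat \<lceil>1/t\<rceil>)" by linarith
    then have "1/t < real k" unfolding k_def by simp
    then show ?thesis using assms(2) by (simp add: field_simps)
  qed
  ultimately show False using B by simp
qed

lemma sch_nonneg: "em_scheme p1 p2 m \<Longrightarrow> 0 \<le> m x y"
  unfolding em_scheme_def by auto

lemma sch_supp: "em_scheme p1 p2 m \<Longrightarrow> m x y \<noteq> 0 \<Longrightarrow> x \<in> {0<..1} \<and> y \<in> {0<..1}"
  unfolding em_scheme_def by auto

lemma sch_row: "em_scheme p1 p2 m \<Longrightarrow> x \<in> {0<..1} \<Longrightarrow> ((\<lambda>y. m x y) has_sum (x * real (hist p1 x))) {0<..1}"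
  unfolding em_scheme_def by auto

lemma sch_swap: "em_scheme p1 p2 m \<Longrightarrow> em_scheme p2 p1 (\<lambda>x y. m y x)"
  unfolding em_scheme_def by auto

lemma sch_nz:
  assumes "em_scheme p1 p2 m" "m x y \<noteq> 0"
  shows "\<exists>i. p1 i = x"
proof -
  have xy: "x \<in> {0<..1}" "y \<in> {0<..1}" using sch_supp[OF assms] by auto
  have "sum (\<lambda>y. m x y) {y} \<le> x * real (hist p1 x)"
    by (rule finite_sum_le_has_sum[OF sch_row[OF assms(1) xy(1)]]) (use xy assms in \<open>auto simp: sch_nonneg\<close>)
  moreover have "0 < m x y" using sch_nonneg[OF assms(1)] assms(2) by (simp add: order_less_le)
  ultimately have "0 < x * real (hist p1 x)" by simp
  then have "hist p1 x \<noteq> 0" by (cases "hist p1 x = 0") simp_all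
  then have "{a. p1 a = x} \<noteq> {}" unfolding hist_def by (metis card.empty)
  thus ?thesis by auto
qed

lemma has_sum_finsum:
  fixes f :: "'i \<Rightarrow> 'a \<Rightarrow> real"
  assumes "finite I" "\<And>i. i \<in> I \<Longrightarrow> (f i has_sum s i) A"
  shows "((\<lambda>x. \<Sum>i\<in>I. f i x) has_sum (\<Sum>i\<in>I. s i)) A"
  using assms
proof (induction I rule: finite_induct)
  case empty
  then show ?case by simp
next
  case (insert a F)
  then show ?case by (simp add: has_sum_add)
qed

lemma row_has_sum:
  fixes g :: "'b \<Rightarrow> real"
  assumes "(g has_sum s) B" "w \<in> A"
  shows "((\<lambda>(x,y). if w = x then g y else 0) has_sum s) (A \<times> B)"
proof -
  have "((\<lambda>(x,y). if w = x then g y else 0) has_sum s) ((\<lambda>y. (w,y)) ` B)"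
    by (subst has_sum_reindex) (use assms in \<open>auto simp: inj_on_def o_def\<close>)
  also have "?this \<longleftrightarrow> ((\<lambda>(x,y). if w = x then g y else 0) has_sum s) (A \<times> B)"
    by (rule has_sum_cong_neutral) (use assms in auto)
  finally show ?thesis .
qed

lemma N_has_sum:
  assumes "is_distr p1" "em_scheme p1 p2 m" "0 < t"
  shows "((\<lambda>(x,y). m x y * (of_bool (t \<le> x) / x)) has_sum real (card {i. t \<le> p1 i})) ({0<..1}\<times>{0<..1})"
proof -
  define S where "S = {i. t \<le> p1 i}"
  define W where "W = p1 ` S"
  have finS: "finite S" unfolding S_def using distr_finite assms by auto
  have finW: "finite W" unfolding W_def using finS by auto
  have Wb: "w \<in> {0<..1}" "t \<le> w" if "w \<in> W" for w
    using that assms distr_le1[OF assms(1)] unfolding W_def S_def by auto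
  have "card S = (\<Sum>i\<in>S. (1::nat))" by simp
  also have "\<dots> = (\<Sum>w\<in>W. (\<Sum>i\<in>{i. i \<in> S \<and> p1 i = w}. (1::nat)))"
    unfolding W_def by (rule sum.image_gen[OF finS])
  also have "\<dots> = (\<Sum>w\<in>W. card {i\<in>S. p1 i = w})" by simp
  also have "\<dots> = (\<Sum>w\<in>W. hist p1 w)"
  proof (intro sum.cong refl)
    fix w assume w: "w \<in> W"
    have "{i\<in>S. p1 i = w} = {i. p1 i = w}" using Wb(2)[OF w] unfolding S_def by auto
    then show "card {i\<in>S. p1 i = w} = hist p1 w" unfolding hist_def by simp
  qed
  finally have cardS: "real (card S) = (\<Sum>w\<in>W. real (hist p1 w))" by simp
  have rows: "((\<lambda>y. m w y * (1/w)) has_sum real (hist p1 w)) {0<..1}" if "w \<in> W" for w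
  proof -
    have "((\<lambda>y. m w y * (1/w)) has_sum (w * real (hist p1 w)) * (1/w)) {0<..1}"
      by (rule has_sum_cmult_left[OF sch_row[OF assms(2) Wb(1)[OF that]]])
    then show ?thesis using Wb(1)[OF that] by simp
  qed
  have "((\<lambda>p. \<Sum>w\<in>W. (\<lambda>(x,y). if w = x then m w y * (1/w) else 0) p) has_sum (\<Sum>w\<in>W. real (hist p1 w))) ({0<..1}\<times>{0<..1})"
  proof (rule has_sum_finsum[OF finW])
    fix w assume w: "w \<in> W"
    show "((\<lambda>(x,y). if w = x then m w y * (1/w) else 0) has_sum real (hist p1 w)) ({0<..1}\<times>{0<..1})"
      by (rule row_has_sum[OF rows[OF w]]) (use Wb[OF w] in auto)
  qed
  also have "?this \<longleftrightarrow> ((\<lambda>(x,y). m x y * (of_bool (t \<le> x) / x)) has_sum (\<Sum>w\<in>W. real (hist p1 w))) ({0<..1}\<times>{0<..1})"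
  proof (rule has_sum_cong)
    fix p assume "p \<in> {0<..1::real}\<times>{0<..1::real}"
    obtain x y where p: "p = (x,y)" by force
    have "(\<Sum>w\<in>W. (\<lambda>(x,y). if w = x then m w y * (1/w) else 0) p) = (\<Sum>w\<in>W. if w = x then m x y * (1/x) else 0)"
      unfolding p by (intro sum.cong) auto
    also have "\<dots> = (if x \<in> W then m x y * (1/x) else 0)" using finW by simp
    also have "\<dots> = m x y * (of_bool (t \<le> x) / x)"
    proof (cases "x \<in> W")
      case True then show ?thesis using Wb by simp
    next
      case False
      show ?thesis
      proof (cases "t \<le> x")
        case True
        have "\<not> (\<exists>i. p1 i = x)" using False True unfolding W_def S_def by auto
        then have "m x y = 0" using sch_nz[OF assms(2)] by blast
        then show ?thesis using False by simp
      qed (use False in simp)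
    qed
    finally show "(\<Sum>w\<in>W. (\<lambda>(x,y). if w = x then m w y * (1/w) else 0) p) = (\<lambda>(x,y). m x y * (of_bool (t \<le> x) / x)) p"
      unfolding p by simp
  qed
  finally show ?thesis using cardS S_def by simp
qed

lemma N2_has_sum:
  assumes "is_distr p2" "em_scheme p1 p2 m" "0 < t"
  shows "((\<lambda>(x,y). m x y * (of_bool (t \<le> y) / y)) has_sum real (card {i. t \<le> p2 i})) ({0<..1}\<times>{0<..1})"
proof -
  have "((\<lambda>(x,y). m y x * (of_bool (t \<le> x) / x)) has_sum real (card {i. t \<le> p2 i})) ({0<..1}\<times>{0<..1})"
    using N_has_sum[OF assms(1) sch_swap[OF assms(2)] assms(3)] by simp
  then show ?thesis by (subst has_sum_swap) (simp add: case_prod_unfold)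
qed



lemma ennreal_infsum:
  fixes f :: "'a \<Rightarrow> real"
  assumes "f summable_on A" "\<And>x. x \<in> A \<Longrightarrow> 0 \<le> f x"
  shows "ennreal (infsum f A) = infsum (\<lambda>x. ennreal (f x)) A"
proof -
  have "ennreal (infsum f A) = (SUP F\<in>{F. finite F \<and> F \<subseteq> A}. ennreal (sum f F))"
    by (rule infsum_nonneg_is_SUPREMUM_ennreal[OF assms])
  also have "\<dots> = (SUP F\<in>{F. finite F \<and> F \<subseteq> A}. (\<Sum>x\<in>F. ennreal (f x)))"
    using assms(2) by (intro SUP_cong refl) (auto simp: sum_ennreal subset_iff)
  also have "\<dots> = infsum (\<lambda>x. ennreal (f x)) A"
    by (rule nonneg_infsum_complete[symmetric]) simp
  finally show ?thesis .
qed

lemma analytic: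
  assumes d1: "is_distr p1" and d2: "is_distr p2" and sch: "em_scheme p1 p2 m" and tau: "0 < \<tau>"
    and finG: "finite G" and Gt: "\<forall>g\<in>G. \<tau> < g"
    and G1: "\<And>i. \<tau> < p1 i \<Longrightarrow> p1 i \<in> G" and G2: "\<And>i. \<tau> < p2 i \<Longrightarrow> p2 i \<in> G"
  shows "ennreal (\<Sum>t\<in>G. dlt \<tau> G t * \<bar>real (card {i. t \<le> p1 i}) - real (card {i. t \<le> p2 i})\<bar>)
           \<le> 2 * em_cost \<tau> m"
proof -
  define P where "P = {0<..1::real}\<times>{0<..1::real}"
  define D where "D t = (\<lambda>(x,y). m x y * \<bar>of_bool (t \<le> x) / x - of_bool (t \<le> y) / y\<bar>)" for t :: real
  define N1 where "N1 t = real (card {i. t \<le> p1 i})" for t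
  define N2 where "N2 t = real (card {i. t \<le> p2 i})" for t
  have mnn: "\<And>x y. 0 \<le> m x y" using sch by (simp add: sch_nonneg)
  have Dnn: "\<And>p. p \<in> P \<Longrightarrow> 0 \<le> D t p" for t using mnn unfolding D_def P_def by auto
  have claim1: "D t summable_on P \<and> \<bar>N1 t - N2 t\<bar> \<le> infsum (D t) P" if t: "t \<in> G" for t
  proof -
    have tp: "0 < t" using t Gt tau by force
    have a: "((\<lambda>(x,y). m x y * (of_bool (t \<le> x) / x)) has_sum N1 t) P"
      unfolding N1_def P_def by (rule N_has_sum[OF d1 sch tp])
    have b: "((\<lambda>(x,y). m x y * (of_bool (t \<le> y) / y)) has_sum N2 t) P"
      unfolding N2_def P_def by (rule N2_has_sum[OF d2 sch tp])
    have ab: "((\<lambda>p. (\<lambda>(x,y). m x y * (of_bool (t \<le> x) / x)) p + (\<lambda>(x,y). m x y * (of_bool (t \<le> y) / y)) p) has_sum (N1 t + N2 t)) P"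
      by (rule has_sum_add[OF a b])
    have summ: "D t summable_on P"
    proof (rule summable_on_comparison_test[OF has_sum_imp_summable[OF ab]])
      fix p assume p: "p \<in> P"
      obtain x y where pxy: "p = (x,y)" by force
      have xy: "0 < x" "0 < y" using p pxy P_def by auto
      have "\<bar>of_bool (t \<le> x) / x - of_bool (t \<le> y) / y\<bar> \<le> of_bool (t \<le> x) / x + of_bool (t \<le> y) / y"
        using xy by (auto simp: abs_if)
      then have "m x y * \<bar>of_bool (t \<le> x) / x - of_bool (t \<le> y) / y\<bar> \<le> m x y * (of_bool (t \<le> x) / x + of_bool (t \<le> y) / y)"
        using mnn by (intro mult_left_mono) auto
      then show "D t p \<le> (\<lambda>(x,y). m x y * (of_bool (t \<le> x) / x)) p + (\<lambda>(x,y). m x y * (of_bool (t \<le> y) / y)) p"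
        unfolding D_def pxy by (simp add: algebra_simps)
      show "0 \<le> D t p" using Dnn p .
    qed
    have hD: "(D t has_sum infsum (D t) P) P" using summ by simp
    have hmD: "((\<lambda>p. - D t p) has_sum - infsum (D t) P) P" using hD by (simp add: has_sum_uminus)
    have bneg: "((\<lambda>p. - (\<lambda>(x,y). m x y * (of_bool (t \<le> y) / y)) p) has_sum - N2 t) P"
      using b by (simp add: has_sum_uminus)
    have diff: "((\<lambda>p. (\<lambda>(x,y). m x y * (of_bool (t \<le> x) / x)) p + - (\<lambda>(x,y). m x y * (of_bool (t \<le> y) / y)) p) has_sum (N1 t + - N2 t)) P"
      by (rule has_sum_add[OF a bneg])
    have pw: "\<bar>(\<lambda>(x,y). m x y * (of_bool (t \<le> x) / x)) p + - (\<lambda>(x,y). m x y * (of_bool (t \<le> y) / y)) p\<bar> \<le> D t p" for p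
    proof -
      obtain x y where pxy: "p = (x,y)" by force
      have "\<bar>m x y * (of_bool (t \<le> x) / x) - m x y * (of_bool (t \<le> y) / y)\<bar> = m x y * \<bar>of_bool (t \<le> x) / x - of_bool (t \<le> y) / y\<bar>"
      proof -
        have "m x y * (of_bool (t \<le> x) / x) - m x y * (of_bool (t \<le> y) / y) = m x y * (of_bool (t \<le> x) / x - of_bool (t \<le> y) / y)"
          by (rule right_diff_distrib[symmetric])
        then show ?thesis by (simp only: abs_mult abs_of_nonneg[OF mnn])
      qed
      then show ?thesis unfolding D_def pxy by simp
    qed
    have up: "N1 t + - N2 t \<le> infsum (D t) P"
      by (rule has_sum_mono[OF diff hD]) (rule order_trans[OF abs_ge_self pw])
    have lo: "- infsum (D t) P \<le> N1 t + - N2 t"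
      apply (rule has_sum_mono[OF hmD diff])
      subgoal for p using pw[of p] by linarith
      done
    show ?thesis using summ up lo by auto
  qed
  define H where "H p = (\<Sum>t\<in>G. dlt \<tau> G t * D t p)" for p
  define T where "T = (\<Sum>t\<in>G. dlt \<tau> G t * infsum (D t) P)"
  have hH: "(H has_sum T) P"
    unfolding H_def T_def
  proof (rule has_sum_finsum[OF finG])
    fix t assume t: "t \<in> G"
    show "((\<lambda>p. dlt \<tau> G t * D t p) has_sum dlt \<tau> G t * infsum (D t) P) P"
      by (rule has_sum_cmult_right) (use claim1[OF t] in simp)
  qed
  have Hnn: "0 \<le> H p" if "p \<in> P" for p
    unfolding H_def using Dnn[OF that] dlt_pos[OF finG Gt] by (intro sum_nonneg) (simp add: less_imp_le)
  have ST: "(\<Sum>t\<in>G. dlt \<tau> G t * \<bar>N1 t - N2 t\<bar>) \<le> T"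
    unfolding T_def using claim1 dlt_pos[OF finG Gt] by (intro sum_mono mult_left_mono) (auto simp: less_imp_le)
  define c where "c = (\<lambda>(x,y). m x y * \<bar>ln (max x \<tau>) - ln (max y \<tau>)\<bar>)"
  have Hc: "H p \<le> 2 * c p" if p: "p \<in> P" for p
  proof -
    obtain x y where pxy: "p = (x,y)" by force
    have xy: "0 < x" "0 < y" using p pxy P_def by auto
    have Hxy: "H p = m x y * (\<Sum>t\<in>G. dlt \<tau> G t * \<bar>of_bool (t \<le> x) / x - of_bool (t \<le> y) / y\<bar>)"
      unfolding H_def D_def pxy by (simp add: sum_distrib_left algebra_simps)
    show ?thesis
    proof (cases "m x y = 0")
      case True then show ?thesis using Hxy unfolding c_def pxy by simp
    next
      case False
      define X where "X = max x \<tau>"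
      define Y where "Y = max y \<tau>"
      have XG: "X \<in> insert \<tau> G"
      proof (cases "\<tau> < x")
        case True
        obtain i where "p1 i = x" using sch_nz[OF sch False] by blast
        then show ?thesis using True G1 unfolding X_def by auto
      qed (auto simp: X_def)
      have YG: "Y \<in> insert \<tau> G"
      proof (cases "\<tau> < y")
        case True
        obtain i where "p2 i = y" using sch_nz[OF sch_swap[OF sch], of x y] False by blast
        then show ?thesis using True G2 unfolding Y_def by auto
      qed (auto simp: Y_def)
      have eqs: "of_bool (t \<le> x) / x = of_bool (t \<le> X) / X" "of_bool (t \<le> y) / y = of_bool (t \<le> Y) / Y" if "t \<in> G" for t
        using Gt that unfolding X_def Y_def by (auto simp: max_def)
      have "(\<Sum>t\<in>G. dlt \<tau> G t * \<bar>of_bool (t \<le> x) / x - of_bool (t \<le> y) / y\<bar>)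
          = (\<Sum>t\<in>G. dlt \<tau> G t * \<bar>of_bool (t \<le> X) / X - of_bool (t \<le> Y) / Y\<bar>)"
        by (intro sum.cong refl) (simp add: eqs)
      also have "\<dots> \<le> 2 * \<bar>ln X - ln Y\<bar>" by (rule dlt_pair[OF finG Gt tau XG YG])
      finally have "H p \<le> m x y * (2 * \<bar>ln X - ln Y\<bar>)" unfolding Hxy using mnn by (intro mult_left_mono) auto
      then show ?thesis unfolding c_def pxy X_def Y_def by simp
    qed
  qed
  have "ennreal (\<Sum>t\<in>G. dlt \<tau> G t * \<bar>N1 t - N2 t\<bar>) \<le> ennreal T" using ST by (rule ennreal_leI)
  also have "ennreal T = infsum (\<lambda>p. ennreal (H p)) P"
    using hH Hnn ennreal_infsum[of H P] by (simp add: has_sum_iff)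
  also have "\<dots> \<le> infsum (\<lambda>p. ennreal (c p) + ennreal (c p)) P"
  proof (rule infsum_mono)
    fix p assume p: "p \<in> P"
    have "0 \<le> c p" using mnn unfolding c_def by (auto simp: case_prod_unfold)
    then have "ennreal (c p) + ennreal (c p) = ennreal (2 * c p)" by (simp add: ennreal_plus[symmetric])
    then show "ennreal (H p) \<le> ennreal (c p) + ennreal (c p)" using Hc[OF p] by (simp add: ennreal_leI)
  qed (rule nonneg_summable_on_complete; simp)+
  also have "\<dots> = infsum (\<lambda>p. ennreal (c p)) P + infsum (\<lambda>p. ennreal (c p)) P"
    by (rule infsum_add) (rule nonneg_summable_on_complete; simp)+
  also have "infsum (\<lambda>p. ennreal (c p)) P = em_cost \<tau> m"
    unfolding em_cost_def c_def P_def by (simp add: case_prod_unfold)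
  finally show ?thesis unfolding N1_def N2_def by (simp add: mult_2)
qed



lemma sorted_enum:
  fixes p :: "nat \<Rightarrow> real"
  assumes "finite A"
  shows "\<exists>f. bij_betw f {..<card A} A \<and> (\<forall>k l. k \<le> l \<longrightarrow> l < card A \<longrightarrow> p (f l) \<le> p (f k))"
proof -
  define xs where "xs = sort_key (\<lambda>i. - p i) (sorted_list_of_set A)"
  have len: "length xs = card A" unfolding xs_def using assms by simp
  have dist: "distinct xs" unfolding xs_def by simp
  have set: "set xs = A" unfolding xs_def using assms by simp
  have bij: "bij_betw ((!) xs) {..<card A} A" by (rule bij_betw_nth[OF dist]) (use len set in auto)
  have sorted: "sorted (map (\<lambda>i. - p i) xs)" unfolding xs_def by (rule sorted_sort_key)
  have "p (xs ! l) \<le> p (xs ! k)" if "k \<le> l" "l < card A" for k l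
    using sorted_nth_mono[OF sorted, of k l] that len by simp
  then show ?thesis using bij by blast
qed

lemma prefix_lemma:
  fixes a :: "nat \<Rightarrow> real"
  assumes anti: "\<And>k l. k \<le> l \<Longrightarrow> l < n \<Longrightarrow> a l \<le> a k" and k: "k < n"
  shows "(t \<le> a k) \<longleftrightarrow> k < card {j\<in>{..<n}. t \<le> a j}"
proof
  assume "t \<le> a k"
  then have "{..k} \<subseteq> {j\<in>{..<n}. t \<le> a j}"
  proof (intro subsetI)
    fix j assume tk: "t \<le> a k" and "j \<in> {..k}"
    then have jk: "j \<le> k" by simp
    have "a k \<le> a j" by (rule anti[OF jk k])
    then show "j \<in> {j\<in>{..<n}. t \<le> a j}" using tk jk k by simp
  qed
  then have "card {..k} \<le> card {j\<in>{..<n}. t \<le> a j}" by (intro card_mono) auto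
  then show "k < card {j\<in>{..<n}. t \<le> a j}" by simp
next
  assume kc: "k < card {j\<in>{..<n}. t \<le> a j}"
  show "t \<le> a k"
  proof (rule ccontr)
    assume "\<not> t \<le> a k"
    then have "{j\<in>{..<n}. t \<le> a j} \<subseteq> {..<k}"
    proof (intro subsetI)
      fix j assume nt: "\<not> t \<le> a k" and j: "j \<in> {j\<in>{..<n}. t \<le> a j}"
      show "j \<in> {..<k}"
      proof (rule ccontr)
        assume "j \<notin> {..<k}"
        then have "k \<le> j" by simp
        then have "a j \<le> a k" using anti j by simp
        then show False using nt j by simp
      qed
    qed
    then have "card {j\<in>{..<n}. t \<le> a j} \<le> card {..<k}" by (intro card_mono) auto
    then show False using kc by simp
  qed
qed

lemma sum_of_bool_less: "(\<Sum>k<n. of_bool (k < c) :: real) = real (min n c)"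
  by (induction n) (auto simp: min_def)

lemma sum_prefix_diff:
  assumes "c1 \<le> n" "c2 \<le> n"
  shows "(\<Sum>k<n. \<bar>of_bool (k < c1) - of_bool (k < c2) :: real\<bar>) = \<bar>real c1 - real c2\<bar>"
proof (cases "c2 \<le> c1")
  case True
  have "(\<Sum>k<n. \<bar>of_bool (k < c1) - of_bool (k < c2) :: real\<bar>) = (\<Sum>k<n. of_bool (k < c1) - of_bool (k < c2) :: real)"
    using True by (intro sum.cong) auto
  also have "\<dots> = real c1 - real c2" using assms by (simp add: sum_subtractf sum_of_bool_less)
  finally show ?thesis using True by simp
next
  case False
  have "(\<Sum>k<n. \<bar>of_bool (k < c1) - of_bool (k < c2) :: real\<bar>) = (\<Sum>k<n. of_bool (k < c2) - of_bool (k < c1) :: real)"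
    using False by (intro sum.cong) auto
  also have "\<dots> = real c2 - real c1" using assms by (simp add: sum_subtractf sum_of_bool_less)
  finally show ?thesis using False by simp
qed

lemma side:
  assumes d: "is_distr p" and tau: "0 < \<tau>" and n: "card {i. \<tau> < p i} \<le> n"
  shows "\<exists>A' f. finite A' \<and> {i. \<tau> < p i} \<subseteq> A' \<and> bij_betw f {..<n} A' \<and> infinite (- A')
     \<and> (\<forall>k l. k \<le> l \<longrightarrow> l < n \<longrightarrow> p (f l) \<le> p (f k))"
proof -
  define A where "A = {i. \<tau> < p i}"
  have finA: "finite A" unfolding A_def
    by (rule finite_subset[OF _ distr_finite[OF d tau]]) auto
  have Z: "infinite {i. p i = 0}" using d unfolding is_distr_def by auto
  obtain F where F: "finite F" "card F = n - card A" "F \<subseteq> {i. p i = 0}"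
    using infinite_arbitrarily_large[OF Z] by blast
  define A' where "A' = A \<union> F"
  have disj: "A \<inter> F = {}" using F tau unfolding A_def by auto
  have cA': "card A' = n" unfolding A'_def using card_Un_disjoint[OF finA F(1) disj] F(2) n A_def by simp
  have finA': "finite A'" unfolding A'_def using finA F by auto
  obtain f where f: "bij_betw f {..<card A'} A'" "\<forall>k l. k \<le> l \<longrightarrow> l < card A' \<longrightarrow> p (f l) \<le> p (f k)"
    using sorted_enum[OF finA'] by blast
  have "{i. p i = 0} - F \<subseteq> - A'" using tau unfolding A'_def A_def by auto
  moreover have "infinite ({i. p i = 0} - F)" using Z F(1) by auto
  ultimately have "infinite (- A')" using finite_subset by blast
  moreover have "{i. \<tau> < p i} \<subseteq> A'" unfolding A'_def A_def by blast
  ultimately show ?thesis using finA' f cA' by metis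
qed



lemma card_match:
  fixes p :: "nat \<Rightarrow> real" and f :: "nat \<Rightarrow> nat" and \<tau> t :: real
  assumes f: "bij_betw f {..<n} A'" and sub: "{i. \<tau> < p i} \<subseteq> A'" and t: "\<tau> < t"
  shows "card {j\<in>{..<n}. t \<le> max (p (f j)) \<tau>} = card {i. t \<le> p i}"
proof -
  have inj: "inj_on f {..<n}" using f by (simp add: bij_betw_def)
  have eq1: "{j\<in>{..<n}. t \<le> max (p (f j)) \<tau>} = {j\<in>{..<n}. t \<le> p (f j)}" using t by (auto simp: le_max_iff_disj)
  have "f ` {j\<in>{..<n}. t \<le> p (f j)} = {i\<in>A'. t \<le> p i}"
    using f unfolding bij_betw_def by auto
  also have "\<dots> = {i. t \<le> p i}" using sub t by auto
  finally have "card {i. t \<le> p i} = card {j\<in>{..<n}. t \<le> p (f j)}"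
    using card_image[OF inj_on_subset[OF inj]] by (metis (no_types, lifting) mem_Collect_eq subsetI)
  then show ?thesis using eq1 by simp
qed

lemma comb:
  assumes d1: "is_distr p1" and d2: "is_distr p2" and tau: "0 < \<tau>"
    and finG: "finite G" and Gt: "\<forall>g\<in>G. \<tau> < g"
    and G1: "\<And>i. \<tau> < p1 i \<Longrightarrow> p1 i \<in> G" and G2: "\<And>i. \<tau> < p2 i \<Longrightarrow> p2 i \<in> G"
  shows "\<exists>\<pi>. bij \<pi> \<and> ((\<lambda>i. \<bar>max (p1 i) \<tau> - max (p2 (\<pi> i)) \<tau>\<bar>) has_sum
      (\<Sum>t\<in>G. dlt \<tau> G t * \<bar>real (card {i. t \<le> p1 i}) - real (card {i. t \<le> p2 i})\<bar>)) UNIV"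
proof -
  define n where "n = max (card {i. \<tau> < p1 i}) (card {i. \<tau> < p2 i})"
  obtain A' f where A': "finite A'" "{i. \<tau> < p1 i} \<subseteq> A'" "bij_betw f {..<n} A'" "infinite (- A')"
     and fa: "\<forall>k l. k \<le> l \<longrightarrow> l < n \<longrightarrow> p1 (f l) \<le> p1 (f k)"
    using side[OF d1 tau, of n] unfolding n_def by auto
  obtain B' g where B': "finite B'" "{i. \<tau> < p2 i} \<subseteq> B'" "bij_betw g {..<n} B'" "infinite (- B')"
     and gb: "\<forall>k l. k \<le> l \<longrightarrow> l < n \<longrightarrow> p2 (g l) \<le> p2 (g k)"
    using side[OF d2 tau, of n] unfolding n_def by auto
  define \<sigma> where "\<sigma> = g \<circ> the_inv_into {..<n} f"
  have bs: "bij_betw \<sigma> A' B'" unfolding \<sigma>_def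
    by (rule bij_betw_trans[OF bij_betw_the_inv_into[OF A'(3)] B'(3)])
  define e1 where "e1 = from_nat_into (- A')"
  define e2 where "e2 = from_nat_into (- B')"
  have be1: "bij_betw e1 UNIV (- A')" unfolding e1_def by (rule bij_betw_from_nat_into) (use A' in auto)
  have be2: "bij_betw e2 UNIV (- B')" unfolding e2_def by (rule bij_betw_from_nat_into) (use B' in auto)
  define \<sigma>' where "\<sigma>' = e2 \<circ> inv_into UNIV e1"
  have bs': "bij_betw \<sigma>' (- A') (- B')" unfolding \<sigma>'_def
    by (rule bij_betw_trans[OF bij_betw_inv_into[OF be1] be2])
  define \<pi> where "\<pi> i = (if i \<in> A' then \<sigma> i else \<sigma>' i)" for i
  have "bij_betw \<pi> (A' \<union> - A') (B' \<union> - B')"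
  proof (rule bij_betw_combine)
    show "bij_betw \<pi> A' B'" using bs by (rule bij_betw_cong[THEN iffD1, rotated]) (simp add: \<pi>_def)
    show "bij_betw \<pi> (- A') (- B')" using bs' by (rule bij_betw_cong[THEN iffD1, rotated]) (simp add: \<pi>_def)
  qed auto
  then have bij: "bij \<pi>" by simp
  define \<phi> where "\<phi> i = \<bar>max (p1 i) \<tau> - max (p2 (\<pi> i)) \<tau>\<bar>" for i
  define a where "a k = max (p1 (f k)) \<tau>" for k
  define b where "b k = max (p2 (g k)) \<tau>" for k
  have hs: "(\<phi> has_sum (\<Sum>i\<in>A'. \<phi> i)) UNIV"
  proof (rule has_sum_finite_neutralI[OF A'(1)])
    fix i assume "i \<in> UNIV - A'"
    then have iA: "i \<notin> A'" by simp
    then have "p1 i \<le> \<tau>" using A'(2) by force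
    moreover have "\<pi> i \<in> - B'" using iA bs' unfolding \<pi>_def bij_betw_def by auto
    then have "p2 (\<pi> i) \<le> \<tau>" using B'(2) by force
    ultimately show "\<phi> i = 0" unfolding \<phi>_def by simp
  qed auto
  have injf: "inj_on f {..<n}" using A'(3) by (simp add: bij_betw_def)
  have "(\<Sum>i\<in>A'. \<phi> i) = (\<Sum>k<n. \<phi> (f k))" by (rule sum.reindex_bij_betw[OF A'(3), symmetric])
  also have "\<dots> = (\<Sum>k<n. \<bar>a k - b k\<bar>)"
  proof (rule sum.cong[OF refl])
    fix k assume k: "k \<in> {..<n}"
    have "f k \<in> A'" using A'(3) k by (auto simp: bij_betw_def)
    then have "\<pi> (f k) = g k" unfolding \<pi>_def \<sigma>_def using the_inv_into_f_f[OF injf k] by simp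
    then show "\<phi> (f k) = \<bar>a k - b k\<bar>" unfolding \<phi>_def a_def b_def by simp
  qed
  also have "\<dots> = (\<Sum>k<n. \<Sum>t\<in>G. dlt \<tau> G t * \<bar>of_bool (t \<le> a k) - of_bool (t \<le> b k)\<bar>)"
  proof (rule sum.cong[OF refl])
    fix k
    have aG: "a k \<in> insert \<tau> G" unfolding a_def using G1[of "f k"] by (cases "\<tau> < p1 (f k)") (auto simp: max_def)
    have bG: "b k \<in> insert \<tau> G" unfolding b_def using G2[of "g k"] by (cases "\<tau> < p2 (g k)") (auto simp: max_def)
    show "\<bar>a k - b k\<bar> = (\<Sum>t\<in>G. dlt \<tau> G t * \<bar>of_bool (t \<le> a k) - of_bool (t \<le> b k)\<bar>)"
      by (rule dlt_absdiff[OF finG Gt aG bG, symmetric])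
  qed
  also have "\<dots> = (\<Sum>t\<in>G. dlt \<tau> G t * (\<Sum>k<n. \<bar>of_bool (t \<le> a k) - of_bool (t \<le> b k)\<bar>))"
    by (subst sum.swap) (simp add: sum_distrib_left)
  also have "\<dots> = (\<Sum>t\<in>G. dlt \<tau> G t * \<bar>real (card {i. t \<le> p1 i}) - real (card {i. t \<le> p2 i})\<bar>)"
  proof (rule sum.cong[OF refl])
    fix t assume t: "t \<in> G"
    have tt: "\<tau> < t" using t Gt by auto
    have aa: "a l \<le> a k" if "k \<le> l" "l < n" for k l using fa that unfolding a_def by (intro max.mono) auto
    have bb: "b l \<le> b k" if "k \<le> l" "l < n" for k l using gb that unfolding b_def by (intro max.mono) auto
    define c1 where "c1 = card {j\<in>{..<n}. t \<le> a j}"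
    define c2 where "c2 = card {j\<in>{..<n}. t \<le> b j}"
    have "(\<Sum>k<n. \<bar>of_bool (t \<le> a k) - of_bool (t \<le> b k) :: real\<bar>) = (\<Sum>k<n. \<bar>of_bool (k < c1) - of_bool (k < c2) :: real\<bar>)"
    proof (rule sum.cong[OF refl])
      fix k assume "k \<in> {..<n}"
      then have k: "k < n" by simp
      show "\<bar>of_bool (t \<le> a k) - of_bool (t \<le> b k) :: real\<bar> = \<bar>of_bool (k < c1) - of_bool (k < c2)\<bar>"
      proof -
        have e1: "(t \<le> a k) = (k < c1)" unfolding c1_def by (rule prefix_lemma[where a=a and n=n and k=k and t=t, OF aa k])
        have e2: "(t \<le> b k) = (k < c2)" unfolding c2_def by (rule prefix_lemma[where a=b and n=n and k=k and t=t, OF bb k])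
        show ?thesis by (simp only: e1 e2)
      qed
    qed
    also have "\<dots> = \<bar>real c1 - real c2\<bar>"
    proof (rule sum_prefix_diff)
      have "c1 \<le> card {..<n}" unfolding c1_def by (rule card_mono[OF finite_lessThan]) blast
      then show "c1 \<le> n" by simp
      have "c2 \<le> card {..<n}" unfolding c2_def by (rule card_mono[OF finite_lessThan]) blast
      then show "c2 \<le> n" by simp
    qed
    also have "c1 = card {i. t \<le> p1 i}" unfolding c1_def a_def by (rule card_match[OF A'(3) A'(2) tt])
    also have "c2 = card {i. t \<le> p2 i}" unfolding c2_def b_def by (rule card_match[OF B'(3) B'(2) tt])
    finally show "dlt \<tau> G t * (\<Sum>k<n. \<bar>of_bool (t \<le> a k) - of_bool (t \<le> b k)\<bar>) = dlt \<tau> G t * \<bar>real (card {i. t \<le> p1 i}) - real (card {i. t \<le> p2 i})\<bar>"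
      by simp
  qed
  finally have "(\<phi> has_sum (\<Sum>t\<in>G. dlt \<tau> G t * \<bar>real (card {i. t \<le> p1 i}) - real (card {i. t \<le> p2 i})\<bar>)) UNIV"
    using hs by simp
  then show ?thesis using bij unfolding \<phi>_def by blast
qed



theorem fact1:
  fixes \<tau> \<epsilon> :: real and p1 p2 :: "nat \<Rightarrow> real"
  assumes "0 < \<tau>" "\<tau> \<le> 1"
    and "is_distr p1" "is_distr p2"
    and "0 \<le> \<epsilon>"
    and "R_trunc \<tau> p1 p2 \<le> ennreal \<epsilon>"
  shows "\<exists>\<pi>. bij \<pi> \<and>
    (\<lambda>i. \<bar>max (p1 i) \<tau> - max (p2 (\<pi> i)) \<tau>\<bar>) summable_on UNIV \<and>
    (\<Sum>\<^sub>\<infinity>i. \<bar>max (p1 i) \<tau> - max (p2 (\<pi> i)) \<tau>\<bar>) \<le> 2 * \<epsilon>"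
proof -
  note tau = assms(1) and d1 = assms(3) and d2 = assms(4)
  define G where "G = p1 ` {i. \<tau> < p1 i} \<union> p2 ` {i. \<tau> < p2 i}"
  have fin1: "finite {i. \<tau> < p1 i}" by (rule finite_subset[OF _ distr_finite[OF d1 tau]]) auto
  have fin2: "finite {i. \<tau> < p2 i}" by (rule finite_subset[OF _ distr_finite[OF d2 tau]]) auto
  have finG: "finite G" unfolding G_def using fin1 fin2 by simp
  have Gt: "\<forall>g\<in>G. \<tau> < g" unfolding G_def by auto
  have G1: "\<And>i. \<tau> < p1 i \<Longrightarrow> p1 i \<in> G" unfolding G_def by auto
  have G2: "\<And>i. \<tau> < p2 i \<Longrightarrow> p2 i \<in> G" unfolding G_def by auto
  define S where "S = (\<Sum>t\<in>G. dlt \<tau> G t * \<bar>real (card {i. t \<le> p1 i}) - real (card {i. t \<le> p2 i})\<bar>)"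
  obtain \<pi> where bij: "bij \<pi>" and hs: "((\<lambda>i. \<bar>max (p1 i) \<tau> - max (p2 (\<pi> i)) \<tau>\<bar>) has_sum S) UNIV"
    using comb[OF d1 d2 tau finG Gt G1 G2] unfolding S_def by blast
  have Sle: "S \<le> 2 * \<epsilon> + 2 * \<delta>" if \<delta>: "0 < \<delta>" for \<delta>
  proof -
    have "ennreal \<epsilon> < ennreal (\<epsilon> + \<delta>)" using \<delta> assms(5) by (intro ennreal_lessI) auto
    then have "R_trunc \<tau> p1 p2 < ennreal (\<epsilon> + \<delta>)" using assms(6) by (rule le_less_trans[rotated])
    then obtain m where m: "em_scheme p1 p2 m" "em_cost \<tau> m < ennreal (\<epsilon> + \<delta>)"
      unfolding R_trunc_def by (auto simp: INF_less_iff)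
    have "ennreal S \<le> 2 * em_cost \<tau> m"
      unfolding S_def by (rule analytic[OF d1 d2 m(1) tau finG Gt G1 G2])
    also have "\<dots> \<le> 2 * ennreal (\<epsilon> + \<delta>)" using m(2) by (intro mult_left_mono) auto
    also have "\<dots> = ennreal (2 * \<epsilon> + 2 * \<delta>)"
    proof -
      have "ennreal (2 * \<epsilon> + 2 * \<delta>) = ennreal 2 * ennreal (\<epsilon> + \<delta>)"
        using \<delta> assms(5) by (subst ennreal_mult[symmetric]) (auto simp: algebra_simps)
      then show ?thesis by simp
    qed
    finally show ?thesis using \<delta> assms(5) by (subst (asm) ennreal_le_iff) auto
  qed
  have "S \<le> 2 * \<epsilon>"
  proof (rule ccontr)
    assume "\<not> S \<le> 2 * \<epsilon>"
    then have "0 < (S - 2 * \<epsilon>) / 4" by simp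
    from Sle[OF this] show False using \<open>\<not> S \<le> 2 * \<epsilon>\<close> by (simp add: field_simps)
  qed
  moreover have "(\<lambda>i. \<bar>max (p1 i) \<tau> - max (p2 (\<pi> i)) \<tau>\<bar>) summable_on UNIV" using hs by (rule has_sum_imp_summable)
  moreover have "(\<Sum>\<^sub>\<infinity>i. \<bar>max (p1 i) \<tau> - max (p2 (\<pi> i)) \<tau>\<bar>) = S" using hs by (simp add: has_sum_iff)
  ultimately show ?thesis using bij by auto
qed


end
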